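(* Let $n\ge1$, $s\in\{1,\dots,n\}$ and let $C\in\mathbb{R}^{n\times n}$ be symmetric positive definite. For all $t_1,t_2$ with $0<t_1\le t_2\le\lambda_{\min}(C)$, $\hat z^D(t_1)\ge\hat z^D(t_2)$.
   Context: $\lambda_{\min}(C)$ is the smallest eigenvalue of $C$. For $0\le t\le\lambda_{\min}(C)$ let $A(t)\in\mathbb{R}^{n\times n}$ be a Cholesky factor of $C-tI$ (so $C-tI=A(t)^\top A(t)$), with $i$-th column $a_i(t)$, and for $x\in[0,1]^n$ let $M_t(x)=\sum_i x_i a_i(t)a_i(t)^\top$. For $t>0$, $\hat z^D(t)=\max\{\log\det(M_t(x)+tI) : x\in[0,1]^n,\ \sum_i x_i=s\}-(n-s)\log(t)$ (natural log). *)

theory Defs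
  imports "HOL-Analysis.Analysis"
begin

text \<open>Matrices are indexed by a finite linearly ordered type 'n, with n = CARD('n).\<close>

definition sym_pos_def_mat :: "real^'n^'n \<Rightarrow> bool" where
  "sym_pos_def_mat C \<longleftrightarrow> transpose C = C \<and> (\<forall>x. x \<noteq> 0 \<longrightarrow> x \<bullet> (C *v x) > 0)"

definition is_eigenvalue :: "real^'n^'n \<Rightarrow> real \<Rightarrow> bool" where
  "is_eigenvalue C l \<longleftrightarrow> (\<exists>v. v \<noteq> 0 \<and> C *v v = l *\<^sub>R v)"

definition lambda_min :: "real^'n^'n \<Rightarrow> real" where
  "lambda_min C = Min {l. is_eigenvalue C l}"

definition cholesky_factor :: "((real, 'n::{finite,linorder}) vec, 'n) vec \<Rightarrow> ((real, 'n) vec, 'n) vec \<Rightarrow> bool" where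
  "cholesky_factor B A \<longleftrightarrow> transpose A ** A = B \<and>
     (\<forall>i j. j < i \<longrightarrow> A $ i $ j = 0) \<and> (\<forall>i. A $ i $ i \<ge> 0)"

definition outer :: "real^'n \<Rightarrow> real^'n^'n" where
  "outer a = (\<chi> i j. a $ i * a $ j)"

definition Mmat :: "real^'n^'n \<Rightarrow> real^'n \<Rightarrow> real^'n^'n" where
  "Mmat A x = (\<Sum>i\<in>UNIV. (x $ i) *\<^sub>R outer (column i A))"

definition zD :: "real^'n^'n \<Rightarrow> nat \<Rightarrow> real \<Rightarrow> real" where
  "zD A s t =
     (SUP x\<in>{x::real^'n. (\<forall>i. 0 \<le> x $ i \<and> x $ i \<le> 1) \<and> (\<Sum>i\<in>UNIV. x $ i) = real s}.
        ln (det (Mmat A x + t *\<^sub>R mat 1)))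
     - (real CARD('n) - real s) * ln t"

end

theory Submission
  imports Defs
begin

definition dg :: "real^'n \<Rightarrow> real^'n^'n" where
  "dg v = (\<chi> i j. if i = j then v$i else 0)"

lemma dg_left[simp]: "(dg v ** M) $ i $ j = v$i * M$i$j"
  by (simp add: dg_def matrix_matrix_mult_def if_distrib if_distribR cong: if_cong)

lemma dg_right[simp]: "(M ** dg v) $ i $ j = M$i$j * v$j"
  by (simp add: dg_def matrix_matrix_mult_def if_distrib if_distribR cong: if_cong)

lemma det_dg: "det (dg v) = (\<Prod>i\<in>UNIV. v$i)"
  by (subst det_diagonal) (auto simp: dg_def)

lemma det_cont:
  fixes f :: "'a::topological_space \<Rightarrow> real^'n^'n"
  assumes "continuous_on S f"
  shows "continuous_on S (\<lambda>x. det (f x))"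
  unfolding det_def
  by (intro continuous_on_sum continuous_on_mult continuous_on_const continuous_on_prod
      continuous_on_component assms)

lemma det_nz_ker:
  fixes M :: "real^'n^'n"
  assumes "\<And>z. M *v z = 0 \<Longrightarrow> z = 0"
  shows "det M \<noteq> 0"
proof -
  obtain B where "B ** M = mat 1" using matrix_left_invertible_ker[of M] assms by blast
  then have "det B * det M = 1" by (metis det_I det_mul)
  then show ?thesis by auto
qed

lemma det_pos_homotopy:
  fixes M :: "real \<Rightarrow> real^'n^'n"
  assumes "continuous_on {0..1} M" "\<And>u. u \<in> {0..1} \<Longrightarrow> det (M u) \<noteq> 0" "det (M 0) > 0"
  shows "det (M 1) > 0"
proof (rule ccontr)
  assume "\<not> det (M 1) > 0"
  then have "det (M 1) \<le> 0" by simp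
  from IVT2'[of "\<lambda>u. det (M u)" 1 0 0, OF this] assms(3) det_cont[OF assms(1)]
  obtain u where "0 \<le> u" "u \<le> 1" "det (M u) = 0" by auto
  with assms(2) show False by auto
qed

lemma det_pos_pd:
  fixes M :: "real^'n^'n"
  assumes "\<And>z. z \<noteq> 0 \<Longrightarrow> z \<bullet> (M *v z) > 0"
  shows "det M > 0"
proof -
  let ?N = "\<lambda>u::real. u *\<^sub>R M + (1 - u) *\<^sub>R mat 1"
  have "det (?N 1) > 0"
  proof (rule det_pos_homotopy[where M="?N"])
    show "continuous_on {0..1} ?N" by (intro continuous_intros)
    show "det (?N 0) > 0" by simp
    fix u :: real assume u: "u \<in> {0..1}"
    show "det (?N u) \<noteq> 0"
    proof (rule det_nz_ker, rule ccontr)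
      fix z assume z: "?N u *v z = 0" "z \<noteq> 0"
      have "?N u *v z = u *\<^sub>R (M *v z) + (1 - u) *\<^sub>R z"
        by (simp add: scaleR_matrix_vector_assoc matrix_vector_mult_add_rdistrib del: scaleR_matrix_vector_assoc[symmetric]) (metis matrix_vector_mul_lid scaleR_matrix_vector_assoc)
      then have "0 = u * (z \<bullet> (M *v z)) + (1 - u) * (z \<bullet> z)"
        using z by (metis inner_add_right inner_scaleR_right inner_zero_right)
      moreover have "u * (z \<bullet> (M *v z)) + (1 - u) * (z \<bullet> z) > 0"
      proof (cases "u = 0")
        case True then show ?thesis using z by simp
      next
        case False
        then have "u * (z \<bullet> (M *v z)) > 0" using u assms z by auto
        moreover have "(1 - u) * (z \<bullet> z) \<ge> 0" using u by auto
        ultimately show ?thesis by linarith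
      qed
      ultimately show False by simp
    qed
  qed
  then show ?thesis by simp
qed


lemma perm_ge_id:
  fixes p :: "'n::{finite,linorder} \<Rightarrow> 'n"
  assumes p: "p permutes UNIV" and ge: "\<And>i. p i \<ge> i"
  shows "p = id"
proof (rule ccontr)
  assume "p \<noteq> id"
  then have ne: "{i. p i \<noteq> i} \<noteq> {}" by auto
  define m where "m = Max {i. p i \<noteq> i}"
  have mF: "p m \<noteq> m" using Max_in[OF _ ne] m_def by auto
  then have gt: "p m > m" using ge[of m] by auto
  have "p (p m) = p m"
  proof (rule ccontr)
    assume "p (p m) \<noteq> p m"
    then have "p m \<le> m" unfolding m_def by (intro Max_ge) auto
    with gt show False by simp
  qed
  then have "p m = m" using permutes_inj[OF p] by (auto dest: injD)
  with mF show False by simp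
qed

lemma det_upper:
  fixes A :: "real^'n::{finite,linorder}^'n::{finite,linorder}"
  assumes ld: "\<And>i j. i > j \<Longrightarrow> A$i$j = 0"
  shows "det A = prod (\<lambda>i. A$i$i) (UNIV:: 'n set)"
proof -
  let ?U = "UNIV:: 'n set"
  let ?PU = "{p. p permutes ?U}"
  let ?pp = "(\<lambda>p. of_int (sign p) * prod (\<lambda>i. A$i$p i) (UNIV :: 'n set))"
  have fU: "finite ?U"
    by simp
  have id0: "{id} \<subseteq> ?PU"
    by (auto simp: permutes_id)
  have p0: "\<forall>p \<in> ?PU -{id}. ?pp p = 0"
  proof
    fix p
    assume p: "p \<in> ?PU - {id}"
    then obtain i where i: "p i < i"
      using perm_ge_id[of p] by (metis DiffD1 DiffD2 mem_Collect_eq not_le singletonI)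
    from ld[OF i] have "\<exists>i \<in> ?U. A$i$p i = 0"
      by blast
    with prod_zero[OF fU]  show "?pp p = 0"
      by force
  qed
  from sum.mono_neutral_cong_left[OF finite_permutations[OF fU] id0 p0] show ?thesis
    unfolding det_def by (simp add: sign_id)
qed

lemma mm_nth: "((A::real^'n^'m) ** B) $ i $ j = (\<Sum>k\<in>UNIV. A$i$k * B$k$j)"
  by (simp add: matrix_matrix_mult_def)

lemma matrix_add_rdistrib': "((A::real^'n^'m) + B) ** C = A ** C + B ** C"
  by (simp add: vec_eq_iff mm_nth sum.distrib algebra_simps)

lemma mat1_scale_left: "(t *\<^sub>R mat 1) ** (A::real^'n^'n) = t *\<^sub>R A"
  by (metis scalar_matrix_assoc matrix_mul_lid)

lemma mat1_scale_right: "(A::real^'n^'n) ** (t *\<^sub>R mat 1) = t *\<^sub>R A"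
  by (metis matrix_scalar_ac matrix_mul_rid)

lemma mdm_nth: "((A::real^'n^'m) ** dg x ** B) $ i $ j = (\<Sum>k\<in>UNIV. A$i$k * x$k * B$k$j)"
  by (subst mm_nth) simp

lemma Mmat_eq: "Mmat A x = A ** dg x ** transpose A"
  by (simp add: mdm_nth vec_eq_iff Mmat_def outer_def column_def sum_component transpose_def
      mult_ac)

lemma inner_mv: "z \<bullet> ((B::real^'n^'n) *v v) = (transpose B *v z) \<bullet> v"
  unfolding inner_vec_def matrix_vector_mult_def transpose_def
  by (simp add: sum_distrib_left sum_distrib_right mult_ac, subst sum.swap, simp add: mult_ac)

lemma sylvester:
  fixes X Y :: "real^'n::{finite,linorder}^'n::{finite,linorder}"
  assumes tri: "\<And>i j. j < i \<Longrightarrow> X$i$j = 0" and dpos: "\<And>i. X$i$i \<ge> 0"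
  shows "det (t *\<^sub>R mat 1 + X ** Y) = det (t *\<^sub>R mat 1 + Y ** X)"
proof -
  define Xe where "Xe = (\<lambda>e::real. X + e *\<^sub>R mat 1)"
  define g where "g = (\<lambda>e. det (t *\<^sub>R mat 1 + Xe e ** Y) - det (t *\<^sub>R mat 1 + Y ** Xe e))"
  have zero: "g e = 0" if e: "e > 0" for e
  proof -
    have "det (Xe e) = (\<Prod>i\<in>UNIV. X$i$i + e)"
      by (subst det_upper) (auto simp: Xe_def mat_def tri)
    also have "\<dots> > 0" using dpos e by (intro prod_pos) (auto intro: add_nonneg_pos)
    finally have nz: "det (Xe e) \<noteq> 0" by simp
    have "Xe e ** (t *\<^sub>R mat 1 + Y ** Xe e) = (t *\<^sub>R mat 1 + Xe e ** Y) ** Xe e"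
      by (simp add: matrix_add_ldistrib matrix_add_rdistrib' mat1_scale_left mat1_scale_right
          matrix_mul_assoc)
    then have "det (Xe e) * det (t *\<^sub>R mat 1 + Y ** Xe e) = det (t *\<^sub>R mat 1 + Xe e ** Y) * det (Xe e)"
      by (metis det_mul)
    with nz show ?thesis unfolding g_def by simp
  qed
  have c1: "continuous_on UNIV (\<lambda>e. t *\<^sub>R mat 1 + Xe e ** Y)"
    unfolding Xe_def by (simp add: matrix_add_rdistrib' continuous_intros
        flip: scalar_matrix_assoc)
  have c2: "continuous_on UNIV (\<lambda>e. t *\<^sub>R mat 1 + Y ** Xe e)"
    unfolding Xe_def by (simp add: matrix_add_ldistrib continuous_intros matrix_scalar_ac
        flip: scalar_matrix_assoc)
  have "continuous_on UNIV g"
    unfolding g_def by (rule continuous_on_diff; rule det_cont; fact)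
  then have "(g \<longlongrightarrow> g 0) (at_right 0)"
  proof -
    have "isCont g 0" using \<open>continuous_on UNIV g\<close> continuous_on_eq_continuous_at[of UNIV g] by simp
    then have "(g \<longlongrightarrow> g 0) (at 0 within UNIV)" by (simp add: isCont_def)
    then show ?thesis by (rule tendsto_within_subset) simp
  qed
  moreover have "(g \<longlongrightarrow> 0) (at_right 0)"
  proof (rule tendsto_eventually)
    show "\<forall>\<^sub>F x in at_right 0. g x = 0"
      using eventually_at_right_less[of "0::real"] by eventually_elim (rule zero)
  qed
  ultimately have "g 0 = 0" using tendsto_unique[OF trivial_limit_at_right_real] by blast
  then show ?thesis unfolding g_def Xe_def by simp
qed

lemma psd_pos:
  fixes B :: "real^'n^'n"
  assumes t: "t > 0" and w: "\<And>i. w$i \<ge> 0"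
  shows "det (t *\<^sub>R mat 1 + B ** dg w ** transpose B) > 0"
proof (rule det_pos_pd)
  fix z :: "real^'n" assume z: "z \<noteq> 0"
  define y where "y = transpose B *v z"
  have "(t *\<^sub>R mat 1 + B ** dg w ** transpose B) *v z = t *\<^sub>R z + B *v (dg w *v y)"
  proof -
    have "(t *\<^sub>R mat 1) *v z = t *\<^sub>R z"
      by (metis matrix_vector_mul_lid scaleR_matrix_vector_assoc)
    moreover have "(B ** dg w ** transpose B) *v z = B *v (dg w *v y)"
      unfolding y_def by (simp only: matrix_vector_mul_assoc matrix_mul_assoc)
    ultimately show ?thesis by (simp only: matrix_vector_mult_add_rdistrib)
  qed
  then have "z \<bullet> ((t *\<^sub>R mat 1 + B ** dg w ** transpose B) *v z) = t * (z \<bullet> z) + y \<bullet> (dg w *v y)"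
    by (simp add: inner_add_right inner_mv y_def)
  moreover have "y \<bullet> (dg w *v y) = (\<Sum>i\<in>UNIV. w$i * (y$i)^2)"
    by (simp add: inner_vec_def matrix_vector_mult_def dg_def if_distrib if_distribR
        power2_eq_square mult_ac cong: if_cong)
  moreover have "(\<Sum>i\<in>UNIV. w$i * (y$i)^2) \<ge> 0" using w by (intro sum_nonneg) auto
  moreover have "z \<bullet> z > 0" using z by simp
  ultimately show "z \<bullet> ((t *\<^sub>R mat 1 + B ** dg w ** transpose B) *v z) > 0"
    using t by (metis add_pos_nonneg mult_pos_pos)
qed


lemma detpos_EDG:
  fixes B :: "real^'n::{finite,linorder}^'n::{finite,linorder}"
  assumes tri: "\<And>i j. j < i \<Longrightarrow> B$i$j = 0" and dpos: "\<And>i. B$i$i \<ge> 0"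
    and e: "\<And>i. e$i > 0" and d: "\<And>i. d$i \<ge> 0"
  shows "det (dg e + dg d ** (transpose B ** B)) > 0"
proof -
  define w where "w = (\<chi> i. d$i / e$i)"
  have w: "w$i \<ge> 0" for i using d[of i] e[of i] by (simp add: w_def)
  have eq: "dg e + dg d ** (transpose B ** B) = dg e ** (mat 1 + dg w ** (transpose B ** B))"
    using e by (simp add: vec_eq_iff matrix_add_ldistrib w_def) (simp add: dg_def mat_def less_imp_neq[OF e, symmetric])
  have "det (mat 1 + dg w ** (transpose B ** B)) = det (1 *\<^sub>R mat 1 + (dg w ** transpose B) ** B)"
    by (simp add: matrix_mul_assoc)
  also have "\<dots> = det (1 *\<^sub>R mat 1 + B ** (dg w ** transpose B))"
    using sylvester[OF tri dpos, of 1 "dg w ** transpose B"] by simp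
  also have "\<dots> = det (1 *\<^sub>R mat 1 + B ** dg w ** transpose B)"
    by (simp add: matrix_mul_assoc)
  also have "\<dots> > 0" using psd_pos[of 1 w B] w by simp
  finally have p1: "det (mat 1 + dg w ** (transpose B ** B)) > 0" .
  have p2: "det (dg e) > 0" using e by (simp add: det_dg prod_pos)
  show ?thesis unfolding eq det_mul using p1 p2 by simp
qed


definition vupd :: "real^'n \<Rightarrow> 'n \<Rightarrow> real \<Rightarrow> real^'n" where
  "vupd v i a = (\<chi> j. if j = i then a else v$j)"

lemma affine_det:
  fixes N :: "real^'n^'n"
  shows "\<exists>\<alpha> \<beta>. \<forall>e. det (dg (vupd v i e) + N) = e * \<alpha> + \<beta>"
proof -
  define R where "R = dg (vupd v i 0) + N"
  have "det (dg (vupd v i e) + N) = e * det (\<chi> k. if k = i then axis i 1 else R$k)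
     + det (\<chi> k. if k = i then N$i else R$k)" for e
  proof -
    have "dg (vupd v i e) + N = (\<chi> k. if k = i then e *s axis i 1 + N$i else R$k)"
      by (simp add: vec_eq_iff R_def dg_def vupd_def axis_def)
    then show ?thesis
      by (simp add: det_row_add[of i "\<lambda>k. e *s axis i 1" "\<lambda>k. N$i" "\<lambda>k. R$k"]
          det_row_mul[of i e "\<lambda>k. axis i 1" "\<lambda>k. R$k"])
  qed
  then show ?thesis by blast
qed

lemma step_lemma:
  fixes B :: "real^'n::{finite,linorder}^'n::{finite,linorder}"
  assumes tri: "\<And>i j. j < i \<Longrightarrow> B$i$j = 0" and dpos: "\<And>i. B$i$i \<ge> 0"
    and v: "\<And>j. v$j > 0" and d: "\<And>i. d$i \<ge> 0" and ab: "0 < a" "a \<le> b"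
  shows "det (dg (vupd v i b) + dg d ** (transpose B ** B)) * a
       \<le> det (dg (vupd v i a) + dg d ** (transpose B ** B)) * b"
proof -
  let ?N = "dg d ** (transpose B ** B)"
  obtain \<alpha> \<beta> where ab_eq: "\<And>e. det (dg (vupd v i e) + ?N) = e * \<alpha> + \<beta>"
    using affine_det[of v i ?N] by blast
  have pos: "e * \<alpha> + \<beta> > 0" if "e > 0" for e
  proof -
    have "\<And>j. vupd v i e $ j > 0" using v that by (simp add: vupd_def)
    from detpos_EDG[OF tri dpos this d] show ?thesis by (simp add: ab_eq)
  qed
  have "\<beta> \<ge> 0"
  proof (rule ccontr)
    assume "\<not> \<beta> \<ge> 0"
    then have bn: "\<beta> < 0" by simp
    define e where "e = - \<beta> / (2 * (\<bar>\<alpha>\<bar> + 1))"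
    have ep: "e > 0" using bn unfolding e_def by (intro divide_pos_pos) (auto simp: add_nonneg_pos)
    have "e * (\<bar>\<alpha>\<bar> + 1) = - \<beta> / 2" unfolding e_def by (simp add: field_simps)
    then have h1: "e * \<bar>\<alpha>\<bar> + e = - \<beta> / 2" by (simp add: algebra_simps)
    have h2: "e * \<alpha> \<le> e * \<bar>\<alpha>\<bar>" using ep by (intro mult_left_mono) auto
    have "e * \<alpha> + \<beta> < 0" using h1 h2 ep bn by linarith
    with pos[OF ep] show False by simp
  qed
  then have "b * (a * \<alpha> + \<beta>) - a * (b * \<alpha> + \<beta>) \<ge> 0"
    using ab mult_left_mono[of a b \<beta>] by (simp add: algebra_simps)
  then show ?thesis by (simp add: ab_eq algebra_simps)
qed


lemma raise_all:
  fixes B :: "real^'n::{finite,linorder}^'n::{finite,linorder}"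
  assumes tri: "\<And>i j. j < i \<Longrightarrow> B$i$j = 0" and dpos: "\<And>i. B$i$i \<ge> 0"
    and v: "\<And>j. v$j > 0" and vv: "\<And>j. v$j \<le> v'$j" and d: "\<And>i. d$i \<ge> 0"
  shows "det (dg v' + dg d ** (transpose B ** B)) * (\<Prod>j\<in>UNIV. v$j)
       \<le> det (dg v + dg d ** (transpose B ** B)) * (\<Prod>j\<in>UNIV. v'$j)"
proof -
  let ?N = "dg d ** (transpose B ** B)"
  define vS where "vS = (\<lambda>S. (\<chi> j. if j \<in> S then v'$j else v$j))"
  have vSpos: "vS S $ j > 0" for S j using v[of j] vv[of j] by (simp add: vS_def)
  have main: "det (dg (vS S) + ?N) * (\<Prod>j\<in>UNIV. v$j) \<le> det (dg v + ?N) * (\<Prod>j\<in>UNIV. vS S $ j)"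
    if "finite S" for S
    using that
  proof (induction S rule: finite_induct)
    case empty
    have "vS {} = v" by (simp add: vS_def vec_eq_iff)
    then show ?case by simp
  next
    case (insert i S)
    have e1: "vS (insert i S) = vupd (vS S) i (v'$i)"
      by (simp add: vS_def vupd_def vec_eq_iff)
    have e2: "vS S = vupd (vS S) i (v$i)"
      using insert.hyps by (simp add: vS_def vupd_def vec_eq_iff)
    have st: "det (dg (vS (insert i S)) + ?N) * v$i \<le> det (dg (vS S) + ?N) * v'$i"
      using step_lemma[OF tri dpos vSpos d v[of i] vv[of i], of S i] e1 e2 by metis
    have pr1: "(\<Prod>j\<in>UNIV. vS S $ j) = v$i * (\<Prod>j\<in>UNIV-{i}. vS S $ j)"
      using insert.hyps by (simp add: prod.remove[of UNIV i] vS_def)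
    have pr2: "(\<Prod>j\<in>UNIV. vS (insert i S) $ j) = v'$i * (\<Prod>j\<in>UNIV-{i}. vS S $ j)"
      by (simp add: prod.remove[of UNIV i] vS_def)
    define P where "P = (\<Prod>j\<in>UNIV-{i}. vS S $ j)"
    define Pv where "Pv = (\<Prod>j\<in>UNIV. v$j)"
    have Pv: "Pv > 0" unfolding Pv_def using v by (simp add: prod_pos)
    have vi: "v$i > 0" "v'$i > 0" using v[of i] vv[of i] by auto
    have "det (dg (vS (insert i S)) + ?N) * Pv * v$i \<le> det (dg (vS S) + ?N) * v'$i * Pv"
      using mult_right_mono[OF st, of Pv] Pv by (simp add: mult_ac)
    also have "\<dots> \<le> det (dg v + ?N) * (v$i * P) * v'$i"
      using mult_right_mono[OF insert.IH, of "v'$i"] vi pr1 by (simp add: mult_ac Pv_def P_def)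
    finally have "det (dg (vS (insert i S)) + ?N) * Pv * v$i \<le> (det (dg v + ?N) * (v'$i * P)) * v$i"
      by (simp add: mult_ac)
    then have "det (dg (vS (insert i S)) + ?N) * Pv \<le> det (dg v + ?N) * (v'$i * P)"
      using vi by simp
    then show ?case using pr2 by (simp add: Pv_def P_def)
  qed
  have "vS UNIV = v'" by (simp add: vS_def vec_eq_iff)
  then show ?thesis using main[of UNIV] by simp
qed


lemma Q_eq:
  fixes A C :: "real^'n::{finite,linorder}^'n::{finite,linorder}"
  assumes ch: "cholesky_factor (C - t *\<^sub>R mat 1) A"
  shows "det (Mmat A x + t *\<^sub>R mat 1) = det (t *\<^sub>R mat 1 + dg x ** (C - t *\<^sub>R mat 1))"
proof -
  from ch have eq: "transpose A ** A = C - t *\<^sub>R mat 1" and tri: "\<And>i j. j < i \<Longrightarrow> A$i$j = 0"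
    and dp: "\<And>i. A$i$i \<ge> 0" unfolding cholesky_factor_def by auto
  have "det (Mmat A x + t *\<^sub>R mat 1) = det (t *\<^sub>R mat 1 + A ** (dg x ** transpose A))"
    by (simp add: Mmat_eq matrix_mul_assoc add.commute)
  also have "\<dots> = det (t *\<^sub>R mat 1 + (dg x ** transpose A) ** A)"
    by (rule sylvester[OF tri dp])
  also have "\<dots> = det (t *\<^sub>R mat 1 + dg x ** (C - t *\<^sub>R mat 1))"
    by (simp add: eq flip: matrix_mul_assoc)
  finally show ?thesis .
qed

lemma Q_pos:
  fixes A :: "real^'n^'n"
  assumes "t > 0" "\<And>i. x$i \<ge> 0"
  shows "det (Mmat A x + t *\<^sub>R mat 1) > 0"
  using psd_pos[OF assms, of A] by (simp add: Mmat_eq add.commute)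

lemma ln_interp:
  fixes t1 t2 d :: real
  assumes "0 < t1" "t1 \<le> t2" "0 \<le> d" "d \<le> 1"
  shows "(1 - d) * ln t1 + d * ln t2 \<le> ln (t1 + (t2 - t1) * d)"
proof -
  have "exp ((1 - d) *\<^sub>R ln t1 + d *\<^sub>R ln t2) \<le> (1 - d) * exp (ln t1) + d * exp (ln t2)"
    using convex_onD[OF exp_convex, of d "ln t1" "ln t2"] assms by simp
  also have "\<dots> = t1 + (t2 - t1) * d" using assms by (simp add: algebra_simps)
  finally have "exp ((1 - d) * ln t1 + d * ln t2) \<le> t1 + (t2 - t1) * d" by simp
  moreover have "t1 + (t2 - t1) * d > 0" using assms by (simp add: add_pos_nonneg)
  ultimately show ?thesis by (metis ln_exp ln_le_cancel_iff exp_gt_zero)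
qed

lemma per_x:
  fixes C A1 A2 :: "real^'n::{finite,linorder}^'n::{finite,linorder}"
  assumes ch1: "cholesky_factor (C - t1 *\<^sub>R mat 1) A1"
    and ch2: "cholesky_factor (C - t2 *\<^sub>R mat 1) A2"
    and t: "0 < t1" "t1 \<le> t2"
    and x: "\<And>i. 0 \<le> x$i \<and> x$i \<le> 1" and xs: "(\<Sum>i\<in>UNIV. x$i) = real s"
  shows "ln (det (Mmat A2 x + t2 *\<^sub>R mat 1)) - (real CARD('n) - real s) * ln t2
       \<le> ln (det (Mmat A1 x + t1 *\<^sub>R mat 1)) - (real CARD('n) - real s) * ln t1"
proof -
  define Q1 where "Q1 = det (Mmat A1 x + t1 *\<^sub>R mat 1)"
  define Q2 where "Q2 = det (Mmat A2 x + t2 *\<^sub>R mat 1)"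
  from ch2 have eq2: "transpose A2 ** A2 = C - t2 *\<^sub>R mat 1" and tri: "\<And>i j. j < i \<Longrightarrow> A2$i$j = 0"
    and dp: "\<And>i. A2$i$i \<ge> 0" unfolding cholesky_factor_def by auto
  define E where "E = (\<chi> i. t1 + (t2 - t1) * x$i)"
  define T where "T = (\<chi> i::'n. t2)"
  have Epos: "E$i > 0" for i using t x[of i] by (simp add: E_def add_pos_nonneg)
  have ET: "E$i \<le> T$i" for i using t x[of i] mult_left_mono[of "x$i" 1 "t2 - t1"]
    by (simp add: E_def T_def algebra_simps)
  have Q1e: "Q1 = det (dg E + dg x ** (transpose A2 ** A2))"
    unfolding Q1_def Q_eq[OF ch1] eq2
    by (rule arg_cong[where f=det]) (simp add: vec_eq_iff E_def, simp add: dg_def mat_def algebra_simps)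
  have Q2e: "Q2 = det (dg T + dg x ** (transpose A2 ** A2))"
    unfolding Q2_def Q_eq[OF ch2] eq2
    by (rule arg_cong[where f=det]) (simp add: vec_eq_iff T_def, simp add: dg_def mat_def algebra_simps)
  have Q1p: "Q1 > 0" unfolding Q1_def using Q_pos[OF t(1)] x by auto
  have Q2p: "Q2 > 0" unfolding Q2_def using Q_pos[of t2] t x by auto
  have "Q2 * (\<Prod>j\<in>UNIV. E$j) \<le> Q1 * (\<Prod>j\<in>UNIV. T$j)"
    unfolding Q1e Q2e using raise_all[OF tri dp Epos ET, of x] x by auto
  moreover have PE: "(\<Prod>j\<in>UNIV. E$j) > 0" using Epos by (simp add: prod_pos)
  moreover have PT: "(\<Prod>j\<in>UNIV. T$j) = t2 ^ CARD('n)" by (simp add: T_def)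
  ultimately have ineq: "ln (Q2 * (\<Prod>j\<in>UNIV. E$j)) \<le> ln (Q1 * t2 ^ CARD('n))"
    using Q1p Q2p t by (subst ln_le_cancel_iff) auto
  have m0: "ln (\<Prod>j\<in>UNIV. E$j) = (\<Sum>j\<in>UNIV. ln (E$j))"
    using Epos by (subst ln_prod) (auto simp: less_imp_neq[OF Epos, symmetric])
  have m1: "ln (Q2 * (\<Prod>j\<in>UNIV. E$j)) = ln Q2 + ln (\<Prod>j\<in>UNIV. E$j)"
    using Q2p PE Epos by (simp add: ln_mult less_imp_neq[OF Epos, symmetric])
  have m2: "ln (Q1 * t2 ^ CARD('n)) = ln Q1 + real CARD('n) * ln t2"
    using Q1p t by (simp add: ln_mult ln_realpow)
  have L: "ln Q2 + (\<Sum>j\<in>UNIV. ln (E$j)) \<le> ln Q1 + real CARD('n) * ln t2"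
    using ineq m0 m1 m2 by linarith
  have "(\<Sum>j\<in>UNIV. (1 - x$j) * ln t1 + x$j * ln t2) \<le> (\<Sum>j\<in>UNIV. ln (E$j))"
    using ln_interp[OF t] x by (intro sum_mono) (auto simp: E_def)
  moreover have "(\<Sum>j\<in>UNIV. (1 - x$j) * ln t1 + x$j * ln t2)
      = (real CARD('n) - real s) * ln t1 + real s * ln t2"
    by (simp add: sum.distrib sum_subtractf xs flip: sum_distrib_right)
  ultimately show ?thesis using L unfolding Q1_def Q2_def by (simp add: algebra_simps)
qed


theorem proposition3:
  fixes C A1 A2 :: "((real, 'n::{finite,linorder}) vec, 'n) vec" and s :: nat and t1 t2 :: real
  assumes "sym_pos_def_mat C"
    and "1 \<le> s" and "s \<le> CARD('n)"
    and "0 < t1" and "t1 \<le> t2" and "t2 \<le> lambda_min C"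
    and "cholesky_factor (C - t1 *\<^sub>R mat 1) A1"
    and "cholesky_factor (C - t2 *\<^sub>R mat 1) A2"
  shows "zD A1 s t1 \<ge> zD A2 s t2"
proof -
  define F where "F = {x :: (real, 'n) vec. (\<forall>i. 0 \<le> x $ i \<and> x $ i \<le> 1) \<and> (\<Sum>i\<in>UNIV. x $ i) = real s}"
  define f1 where "f1 = (\<lambda>x. ln (det (Mmat A1 x + t1 *\<^sub>R mat 1)))"
  define f2 where "f2 = (\<lambda>x. ln (det (Mmat A2 x + t2 *\<^sub>R mat 1)))"
  define c where "c = (real CARD('n) - real s) * (ln t2 - ln t1)"
  have t2: "t2 > 0" using assms by simp
  have ne: "F \<noteq> {}"
  proof -
    define x0 :: "(real, 'n) vec" where "x0 = (\<chi> i. real s / real CARD('n))"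
    have "x0 \<in> F" using assms(2,3) by (simp add: F_def x0_def divide_le_eq_1)
    then show ?thesis by auto
  qed
  have cF: "compact F"
  proof -
    have "bounded F"
      by (rule bounded_subset[OF bounded_cbox[of 0 1]]) (auto simp: F_def mem_box_cart)
    moreover have "closed F"
      unfolding F_def
      by (intro closed_Collect_conj closed_Collect_all closed_Collect_le closed_Collect_eq
          continuous_intros)
    ultimately show ?thesis by (simp add: compact_eq_bounded_closed)
  qed
  have "continuous_on F f1"
    unfolding f1_def
  proof (rule continuous_on_ln)
    show "continuous_on F (\<lambda>x. det (Mmat A1 x + t1 *\<^sub>R mat 1))"
      unfolding Mmat_def by (intro det_cont continuous_intros)
    show "\<forall>x\<in>F. det (Mmat A1 x + t1 *\<^sub>R mat 1) \<noteq> 0"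
    proof
      fix x assume "x \<in> F"
      then have "\<And>i. 0 \<le> x $ i" by (simp add: F_def)
      from Q_pos[OF assms(4) this, of A1] show "det (Mmat A1 x + t1 *\<^sub>R mat 1) \<noteq> 0" by simp
    qed
  qed
  then have bdd: "bdd_above (f1 ` F)"
    using compact_continuous_image[OF _ cF] by (metis bounded_imp_bdd_above compact_imp_bounded)
  have le: "f2 x \<le> f1 x + c" if "x \<in> F" for x
    using per_x[OF assms(7,8,4,5), of x s] that unfolding F_def f1_def f2_def c_def
    by (simp add: algebra_simps)
  have "(SUP x\<in>F. f2 x) \<le> (SUP x\<in>F. f1 x) + c"
  proof (rule cSUP_least[OF ne])
    fix x assume x: "x \<in> F"
    have "f1 x \<le> (SUP x\<in>F. f1 x)" by (rule cSUP_upper[OF x bdd])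
    with le[OF x] show "f2 x \<le> (SUP x\<in>F. f1 x) + c" by linarith
  qed
  then show ?thesis
    unfolding zD_def F_def[symmetric] f1_def[symmetric] f2_def[symmetric] c_def
    by (simp add: algebra_simps)
qed

end
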